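(* Let $\mathcal{B}$ be a $\sigma$-algebra on a nonempty set $E$, and let $\nu$ be a maxitive measure on $\mathcal{B}$ having a $\mathcal{B}$-measurable cardinal density $c:E\to[0,\infty]$, i.e. $\nu(B)=\sup_{x\in B}c(x)$ for all $B\in\mathcal{B}$. Then for every maxitive measure $\tau$ on $\mathcal{B}$, $\nu\ll\tau$ if and only if $\nu\lll\tau$. In particular $\nu$ is autocontinuous, i.e. $\nu\lll\nu$.
   Context: A maxitive measure on $\mathcal{B}$ is a map $\nu:\mathcal{B}\to[0,\infty]$ with $\nu(\emptyset)=0$ and $\nu(B\cup B')=\max(\nu(B),\nu(B'))$ for all $B,B'\in\mathcal{B}$. A map $f:E\to[0,\infty]$ is $\mathcal{B}$-measurable if $\{f>t\}\in\mathcal{B}$ for all $t\geq 0$. For a maxitive measure $\tau$, a subset $N\subset E$ is $\tau$-negligible if $N\subset G$ for some $G\in\mathcal{B}$ with $\tau(G)=0$. The $\tau$-essential supremum of $f$ on $B$ is $\bigoplus^{\tau}_{x\in B}f(x)=\inf\{t>0: B\cap\{f>t\}\text{ is }\tau\text{-negligible}\}$ (with $\inf\emptyset=\infty$). We write $\nu\ll\tau$ if $\tau(B)=0$ implies $\nu(B)=0$ for all $B\in\mathcal{B}$, and $\nu\lll\tau$ if there exists a $\mathcal{B}$-measurable $f:E\to[0,\infty]$ (a relative density) with $\nu(B)=\bigoplus^{\tau}_{x\in B}f(x)$ for all $B\in\mathcal{B}$. *)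

theory Defs
  imports "HOL-Analysis.Analysis"
begin

definition maxitive :: "'a set set \<Rightarrow> ('a set \<Rightarrow> ennreal) \<Rightarrow> bool" where
  "maxitive \<B> \<nu> \<longleftrightarrow> \<nu> {} = 0 \<and>
     (\<forall>B\<in>\<B>. \<forall>B'\<in>\<B>. \<nu> (B \<union> B') = max (\<nu> B) (\<nu> B'))"

definition B_measurable :: "'a set \<Rightarrow> 'a set set \<Rightarrow> ('a \<Rightarrow> ennreal) \<Rightarrow> bool" where
  "B_measurable E \<B> f \<longleftrightarrow> (\<forall>t. {x\<in>E. f x > t} \<in> \<B>)"

definition negligible_wrt :: "'a set set \<Rightarrow> ('a set \<Rightarrow> ennreal) \<Rightarrow> 'a set \<Rightarrow> bool" where
  "negligible_wrt \<B> \<tau> N \<longleftrightarrow> (\<exists>G\<in>\<B>. N \<subseteq> G \<and> \<tau> G = 0)"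

definition ess_sup_wrt :: "'a set set \<Rightarrow> ('a set \<Rightarrow> ennreal) \<Rightarrow> 'a set \<Rightarrow> ('a \<Rightarrow> ennreal) \<Rightarrow> ennreal" where
  "ess_sup_wrt \<B> \<tau> B f = Inf {t. t > 0 \<and> negligible_wrt \<B> \<tau> (B \<inter> {x. f x > t})}"

definition abs_cont :: "'a set set \<Rightarrow> ('a set \<Rightarrow> ennreal) \<Rightarrow> ('a set \<Rightarrow> ennreal) \<Rightarrow> bool" where
  "abs_cont \<B> \<nu> \<tau> \<longleftrightarrow> (\<forall>B\<in>\<B>. \<tau> B = 0 \<longrightarrow> \<nu> B = 0)"

definition has_rel_density :: "'a set \<Rightarrow> 'a set set \<Rightarrow> ('a set \<Rightarrow> ennreal) \<Rightarrow> ('a set \<Rightarrow> ennreal) \<Rightarrow> bool" where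
  "has_rel_density E \<B> \<nu> \<tau> \<longleftrightarrow>
     (\<exists>f. B_measurable E \<B> f \<and> (\<forall>B\<in>\<B>. \<nu> B = ess_sup_wrt \<B> \<tau> B f))"

end

theory Submission
  imports Defs
begin

lemma dens_imp_ac:
  assumes "has_rel_density E \<B> \<nu> \<tau>"
  shows "abs_cont \<B> \<nu> \<tau>"
  unfolding abs_cont_def
proof (intro ballI impI)
  fix B assume B: "B \<in> \<B>" "\<tau> B = 0"
  from assms obtain f where f: "\<forall>B\<in>\<B>. \<nu> B = ess_sup_wrt \<B> \<tau> B f"
    unfolding has_rel_density_def by blast
  have S: "{t. t > 0 \<and> negligible_wrt \<B> \<tau> (B \<inter> {x. f x > t})} = {t. t > 0}"
    using B unfolding negligible_wrt_def by blast
  have "Inf {t::ennreal. t > 0} \<le> 0"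
    unfolding Inf_le_iff by (metis dense mem_Collect_eq)
  then show "\<nu> B = 0" using f B S unfolding ess_sup_wrt_def by simp
qed

lemma ac_imp_dens:
  assumes "B_measurable E \<B> c"
    and nu: "\<forall>B\<in>\<B>. \<nu> B = (SUP x\<in>B. c x)"
    and ac: "abs_cont \<B> \<nu> \<tau>" and e: "{} \<in> \<B>" "\<tau> {} = 0"
  shows "has_rel_density E \<B> \<nu> \<tau>"
  unfolding has_rel_density_def
proof (intro exI conjI ballI)
  show "B_measurable E \<B> c" by fact
  fix B assume B: "B \<in> \<B>"
  let ?S = "{t. t > 0 \<and> negligible_wrt \<B> \<tau> (B \<inter> {x. c x > t})}"
  have up: "c x \<le> \<nu> B" if "x \<in> B" for x using nu B that by (simp add: SUP_upper)
  have "Inf ?S \<le> \<nu> B"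
    unfolding Inf_le_iff
  proof (intro allI impI)
    fix y assume "y > \<nu> B"
    then obtain x where x: "\<nu> B < x" "x < y" using dense by blast
    have cz: "c z \<le> x" if "z \<in> B" for z using up[OF that] x(1) by simp
    have "B \<inter> {z. c z > x} = {}" using cz by (auto simp: not_less[symmetric])
    hence "negligible_wrt \<B> \<tau> (B \<inter> {z. c z > x})"
      unfolding negligible_wrt_def using e by auto
    moreover have "x > 0" using le_less_trans[OF zero_le x(1)] .
    ultimately show "\<exists>x\<in>?S. x < y" using x(2) by blast
  qed
  moreover have "\<nu> B \<le> Inf ?S"
    unfolding le_Inf_iff
  proof
    fix t assume "t \<in> ?S"
    then obtain G where G: "G \<in> \<B>" "B \<inter> {x. c x > t} \<subseteq> G" "\<tau> G = 0" "t > 0"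
      unfolding negligible_wrt_def by blast
    have "\<nu> G = 0" using ac G unfolding abs_cont_def by blast
    hence cG: "c x \<le> 0" if "x \<in> G" for x using nu G that by (metis SUP_upper)
    have "c x \<le> t" if "x \<in> B" for x
    proof (rule ccontr)
      assume "\<not> c x \<le> t"
      hence "x \<in> G" "c x > t" using G that by auto
      thus False using cG G(4) by (meson leD order.strict_trans)
    qed
    thus "\<nu> B \<le> t" using nu B by (simp add: SUP_least)
  qed
  ultimately show "\<nu> B = ess_sup_wrt \<B> \<tau> B c" unfolding ess_sup_wrt_def by (rule antisym[rotated])
qed

theorem proposition3p2:
  fixes E :: "'a set" and \<B> :: "'a set set" and \<nu> :: "'a set \<Rightarrow> ennreal" and c :: "'a \<Rightarrow> ennreal"
  assumes "sigma_algebra E \<B>"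
    and "E \<noteq> {}"
    and "maxitive \<B> \<nu>"
    and "B_measurable E \<B> c"
    and "\<forall>B\<in>\<B>. \<nu> B = (SUP x\<in>B. c x)"
  shows "(\<forall>\<tau>. maxitive \<B> \<tau> \<longrightarrow> (abs_cont \<B> \<nu> \<tau> \<longleftrightarrow> has_rel_density E \<B> \<nu> \<tau>))
         \<and> has_rel_density E \<B> \<nu> \<nu>"
proof -
  have e: "{} \<in> \<B>" using assms(1) by (auto simp: sigma_algebra_iff2)
  have n0: "\<nu> {} = 0" using assms(3) unfolding maxitive_def by simp
  have 1: "\<forall>\<tau>. maxitive \<B> \<tau> \<longrightarrow> (abs_cont \<B> \<nu> \<tau> \<longleftrightarrow> has_rel_density E \<B> \<nu> \<tau>)"
  proof (intro allI impI iffI)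
    fix \<tau> assume m: "maxitive \<B> \<tau>" and a: "abs_cont \<B> \<nu> \<tau>"
    have "\<tau> {} = 0" using m unfolding maxitive_def by simp
    then show "has_rel_density E \<B> \<nu> \<tau>" using ac_imp_dens[OF assms(4,5) a e] by simp
  next
    fix \<tau> assume "has_rel_density E \<B> \<nu> \<tau>"
    then show "abs_cont \<B> \<nu> \<tau>" by (rule dens_imp_ac)
  qed
  have "abs_cont \<B> \<nu> \<nu>" unfolding abs_cont_def by simp
  then have "has_rel_density E \<B> \<nu> \<nu>" using ac_imp_dens[where \<tau>=\<nu>, OF assms(4,5) _ e n0] by simp
  with 1 show ?thesis by simp
qed

end
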